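(* Let $q=[\alpha:\beta:\gamma]\in\mathcal C_0$ with $\beta\neq\gamma$ (i.e. $q\notin\mathcal H_0$), let $\mathcal H_q=\{\alpha x+\beta y-2\gamma z=0\}$ be the tangent line to $\mathcal C_0$ at $q$, and $$\mathcal C_q^{(4,1,1)}=\{(\beta-2\gamma)^2x^2+(3\beta^2-4\beta\gamma+2\gamma^2)y^2+2\alpha\beta xy-4\alpha\gamma xz-4\beta\gamma yz+4\beta(2\gamma-\beta)z^2=0\}.$$ Then the conics $Q\subset\mathbb P^2(\mathbb C)$ (possibly reducible or non-reduced) such that $Q\cap\mathcal C_0=\{q\}$ set-theoretically and $Q$ meets $\mathcal H_0$ in a single point without containing it, are exactly $2\mathcal H_q$ and $\mathcal C_q^{(4,1,1)}$; they meet $\mathcal H_0$ at $[2\gamma-\beta:\alpha:\alpha]$ and $[\alpha:2\gamma-\beta:2\gamma-\beta]$ respectively.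
   Context: In $\mathbb P^2(\mathbb C)$ with coordinates $[x:y:z]$: $\mathcal C_0=\{x^2+y^2-2z^2=0\}$ (a smooth conic) and $\mathcal H_0=\{y-z=0\}$ (a line). For a plane curve given by $f=0$ with $f$ a square of a linear form $\ell$, $2\{\ell=0\}$ denotes the double line. *)

theory Defs
  imports Complex_Main
begin

text \<open>Points of P^2(C) are represented by nonzero homogeneous coordinate triples (x,y,z);
 a conic by the nonzero coefficient vector (a,b,c,d,e,f) of the ternary quadratic form
 a x^2 + b y^2 + c z^2 + d x y + e x z + f y z, up to nonzero scalar multiples;
 a line by the coefficient triple of a linear form.\<close>

type_synonym pt = "complex \<times> complex \<times> complex"
type_synonym conic = "complex \<times> complex \<times> complex \<times> complex \<times> complex \<times> complex"

definition qform :: "conic \<Rightarrow> pt \<Rightarrow> complex" where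
  "qform Q p = (case Q of (a,b,c,d,e,f) \<Rightarrow> case p of (x,y,z) \<Rightarrow>
     a*x^2 + b*y^2 + c*z^2 + d*x*y + e*x*z + f*y*z)"

definition lform :: "pt \<Rightarrow> pt \<Rightarrow> complex" where
  "lform L p = (case L of (a,b,c) \<Rightarrow> case p of (x,y,z) \<Rightarrow> a*x + b*y + c*z)"

definition pt_eq :: "pt \<Rightarrow> pt \<Rightarrow> bool" where
  "pt_eq p p' = (\<exists>t::complex. t \<noteq> 0 \<and>
     (case p of (x,y,z) \<Rightarrow> p' = (t*x, t*y, t*z)))"

definition conic_eq :: "conic \<Rightarrow> conic \<Rightarrow> bool" where
  "conic_eq Q Q' = (\<exists>t::complex. t \<noteq> 0 \<and>
     (case Q of (a,b,c,d,e,f) \<Rightarrow> Q' = (t*a, t*b, t*c, t*d, t*e, t*f)))"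

definition C0 :: conic where "C0 = (1, 1, -2, 0, 0, 0)"
definition H0 :: pt where "H0 = (0, 1, -1)"               \<comment> \<open>y - z\<close>

definition meets_C0_only_at :: "conic \<Rightarrow> pt \<Rightarrow> bool" where
  "meets_C0_only_at Q q = (\<forall>p. p \<noteq> (0,0,0) \<longrightarrow>
      ((qform Q p = 0 \<and> qform C0 p = 0) \<longleftrightarrow> pt_eq q p))"

definition meets_H0_exactly_at :: "conic \<Rightarrow> pt \<Rightarrow> bool" where
  "meets_H0_exactly_at Q r = (r \<noteq> (0,0,0) \<and> (\<forall>p. p \<noteq> (0,0,0) \<longrightarrow>
      ((qform Q p = 0 \<and> lform H0 p = 0) \<longleftrightarrow> pt_eq r p)))"

definition contains_H0 :: "conic \<Rightarrow> bool" where
  "contains_H0 Q = (\<forall>p. lform H0 p = 0 \<longrightarrow> qform Q p = 0)"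

end

theory Submission
  imports Defs "HOL-Computational_Algebra.Fundamental_Theorem_Algebra"
begin


definition phi :: "complex \<Rightarrow> complex \<Rightarrow> pt" where
  "phi a b = ((2*a^2+b^2)/2, -\<i>*(2*a^2-b^2)/2, a*b)"

lemma phi_on_C0: "qform C0 (phi a b) = 0"
  unfolding qform_def C0_def phi_def by (simp add: field_simps power2_eq_square)

lemma phi_surj:
  assumes "qform C0 (x,y,z) = 0" shows "\<exists>a b. phi a b = (x,y,z)"
proof -
  define u where "u = x + \<i>*y"
  define w where "w = x - \<i>*y"
  have uw: "u*w = 2*z^2" using assms unfolding qform_def C0_def u_def w_def
    by (simp add: algebra_simps power2_eq_square)
  have xy: "x = (u+w)/2" "y = -\<i>*(u-w)/2" unfolding u_def w_def by (auto simp: field_simps)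
  show ?thesis
  proof (cases "u = 0")
    case True
    then have "z = 0" using uw by simp
    show ?thesis
      by (rule exI[of _ 0], rule exI[of _ "csqrt w"]) (simp add: phi_def xy True \<open>z=0\<close>)
  next
    case False
    define a where "a = csqrt (u/2)"
    have a2: "a^2 = u/2" unfolding a_def by simp
    have a0: "a \<noteq> 0" using False a_def by simp
    define b where "b = z/a"
    have "b^2 = z^2/a^2" unfolding b_def by (simp add: power_divide)
    also have "\<dots> = 2*z^2/u"
    proof - have "u = 2*a^2" using a2 by (simp add: field_simps) then show ?thesis using a0 by simp qed
    also have "\<dots> = w" using uw False by (simp add: field_simps)
    finally have b2: "b^2 = w" .
    have "phi a b = (x,y,z)" unfolding phi_def xy using a2 b2 a0
      by (simp add: b_def field_simps)
    then show ?thesis by blast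
  qed
qed

lemma phi_zero: "phi a b = (0,0,0) \<Longrightarrow> a = 0 \<and> b = 0"
proof -
  assume h: "phi a b = (0,0,0)"
  then have "(2*a^2+b^2)/2 = 0" "-\<i>*(2*a^2-b^2)/2 = 0" by (auto simp: phi_def)
  then have "2*a^2 + b^2 = 0" "2*a^2 - b^2 = 0" by auto
  then have "a^2 = 0" "b^2 = 0" by (auto simp: algebra_simps)
  then show ?thesis by simp
qed

lemma ii2: "\<i>^2 = (-1::complex)" by simp

lemma qform_phi_hom: "qform Q (phi (k*a) (k*b)) = k^4 * qform Q (phi a b)"
proof -
  obtain x y z where p: "phi a b = (x,y,z)" by (cases "phi a b")
  from p have xyz: "x = (2*a^2+b^2)/2" "y = -\<i>*(2*a^2-b^2)/2" "z = a*b" by (auto simp: phi_def)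
  have "phi (k*a) (k*b) = (k^2 * x, k^2 * y, k^2 * z)"
    unfolding phi_def xyz by (simp add: power2_eq_square field_simps)
  moreover have "qform Q (k^2*x,k^2*y,k^2*z) = k^4 * qform Q (x,y,z)"
    unfolding qform_def by (cases Q) (simp add: power2_eq_square power4_eq_xxxx algebra_simps)
  ultimately show ?thesis using p by simp
qed

lemma kernel:
  assumes "\<And>a b. qform (A,B,C,D,E,F) (phi a b) = 0"
  shows "B = A \<and> C = -2*A \<and> D = 0 \<and> E = 0 \<and> F = 0"
proof -
  have g: "4*qform (A,B,C,D,E,F) (phi a b) = (4*A-4*B-4*\<i>*D)*a^4 + (4*E-4*\<i>*F)*a^3*b + (4*A+4*B+4*C)*a^2*b^2
     + (2*E+2*\<i>*F)*a*b^3 + (A-B+\<i>*D)*b^4" for a b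
    unfolding qform_def phi_def by (simp add: power2_eq_square power3_eq_cube power4_eq_xxxx field_simps)
  have h: "(4*A-4*B-4*\<i>*D)*a^4 + (4*E-4*\<i>*F)*a^3*b + (4*A+4*B+4*C)*a^2*b^2
     + (2*E+2*\<i>*F)*a*b^3 + (A-B+\<i>*D)*b^4 = 0" for a b
    using g[of a b] assms[of a b] by simp
  have h10: "4*A-4*B-4*\<i>*D = 0" using h[of 1 0] by simp
  have h01: "A-B+\<i>*D = 0" using h[of 0 1] by simp
  have h11: "(4*E-4*\<i>*F) + (4*A+4*B+4*C) + (2*E+2*\<i>*F) = 0" using h[of 1 1] h10 h01 by simp
  have hm: "-(4*E-4*\<i>*F) + (4*A+4*B+4*C) - (2*E+2*\<i>*F) = 0" using h[of 1 "-1"] h10 h01 by simp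
  have h12: "2*(4*E-4*\<i>*F) + 4*(4*A+4*B+4*C) + 8*(2*E+2*\<i>*F) = 0"
  proof -
    have "(4*A-4*B-4*\<i>*D)*1^4 + (4*E-4*\<i>*F)*1^3*2 + (4*A+4*B+4*C)*1^2*2^2
     + (2*E+2*\<i>*F)*1*2^3 + (A-B+\<i>*D)*2^4 = 0" by (rule h)
    then show ?thesis unfolding h10 h01 by simp
  qed
  have D: "D = 0"
  proof -
    have "8*\<i>*D = 4*(A-B+\<i>*D) - (4*A-4*B-4*\<i>*D)" by (simp add: algebra_simps)
    then show ?thesis unfolding h10 h01 by simp
  qed
  have AB: "B = A" using h01 D by simp
  have Z: "4*A+4*B+4*C = 0"
  proof -
    have "2*(4*A+4*B+4*C) = ((4*E-4*\<i>*F) + (4*A+4*B+4*C) + (2*E+2*\<i>*F)) + (-(4*E-4*\<i>*F) + (4*A+4*B+4*C) - (2*E+2*\<i>*F))"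
      by (simp add: algebra_simps)
    then have "2*(4*A+4*B+4*C) = 0" by (simp only: h11 hm add_0_left add_0_right)
    then show ?thesis by (metis mult_eq_0_iff zero_neq_numeral)
  qed
  have XY: "(4*E-4*\<i>*F) + (2*E+2*\<i>*F) = 0"
  proof -
    have "(4*E-4*\<i>*F) + (2*E+2*\<i>*F) = ((4*E-4*\<i>*F) + (4*A+4*B+4*C) + (2*E+2*\<i>*F)) - (4*A+4*B+4*C)"
      by (simp add: algebra_simps)
    then show ?thesis by (simp only: h11) (simp only: Z diff_self)
  qed
  have Y: "2*E+2*\<i>*F = 0"
  proof -
    have "6*(2*E+2*\<i>*F) = (2*(4*E-4*\<i>*F) + 4*(4*A+4*B+4*C) + 8*(2*E+2*\<i>*F)) - 2*((4*E-4*\<i>*F) + (2*E+2*\<i>*F)) - 4*(4*A+4*B+4*C)"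
      by (simp add: algebra_simps)
    also have "\<dots> = 0" apply (simp only: h12) apply (simp only: XY) apply (simp only: Z) by simp
    finally show ?thesis by (metis mult_eq_0_iff zero_neq_numeral)
  qed
  have X: "4*E-4*\<i>*F = 0" using XY Y by simp
  have E: "E = 0"
  proof -
    have "8*E = (4*E-4*\<i>*F) + 2*(2*E+2*\<i>*F)" by (simp add: algebra_simps)
    then show ?thesis unfolding X Y by simp
  qed
  have F: "F = 0" using Y E by simp
  have C: "C = -2*A"
  proof -
    have "4*(C + 2*A) = 4*A+4*B+4*C" using AB by (simp add: algebra_simps)
    then have h: "C + 2*A = 0" using Z by (metis mult_eq_0_iff zero_neq_numeral)
    have "C = (C + 2*A) - 2*A" by simp
    also have "\<dots> = -2*A" by (simp only: h) simp
    finally show ?thesis .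
  qed
  show ?thesis using D AB E F C by simp
qed

lemma poly_rep: "\<exists>P. \<forall>u. poly P u = qform Q (phi (a0*u+c) (b0*u+d))"
proof -
  obtain A B C D E F where Q: "Q = (A,B,C,D,E,F)" by (metis prod_cases6)
  define pa where "pa = [:c, a0:]"
  define pb where "pb = [:d, b0:]"
  define px where "px = smult (1/2) (smult 2 (pa*pa) + pb*pb)"
  define py where "py = smult (-\<i>/2) (smult 2 (pa*pa) - pb*pb)"
  define pz where "pz = pa*pb"
  define P where "P = smult A (px*px) + smult B (py*py) + smult C (pz*pz) + smult D (px*py) + smult E (px*pz) + smult F (py*pz)"
  have pa: "poly pa u = a0*u+c" and pb: "poly pb u = b0*u+d" for u unfolding pa_def pb_def by simp_all
  have h1: "\<And>X::complex. 1/2*X = X/2" by simp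
  have h2: "\<And>X::complex. (-\<i>/2)*X = -\<i>*X/2" by simp
  have "poly P u = qform Q (phi (a0*u+c) (b0*u+d))" for u
    unfolding P_def px_def py_def pz_def Q qform_def phi_def
    by (simp only: poly_add poly_mult poly_smult poly_diff prod.case pa pb power2_eq_square h1 h2 mult.assoc) 
  then show ?thesis by blast
qed

lemma phi_prop:
  assumes "phi a b = (\<tau>*((2*a0^2+b0^2)/2), \<tau>*(-\<i>*(2*a0^2-b0^2)/2), \<tau>*(a0*b0))"
  shows "a*b0 = a0*b"
proof -
  from assms have e: "(2*a^2+b^2)/2 = \<tau>*((2*a0^2+b0^2)/2)" "-\<i>*(2*a^2-b^2)/2 = \<tau>*(-\<i>*(2*a0^2-b0^2)/2)"
    "a*b = \<tau>*(a0*b0)" by (auto simp: phi_def)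
  have "(a*b0 - a0*b)^2 = 0" using e ii2 by algebra
  then show ?thesis by simp
qed

lemma qform_Hq: "qform (\<alpha>^2, \<beta>^2, 4*\<gamma>^2, 2*\<alpha>*\<beta>, -4*\<alpha>*\<gamma>, -4*\<beta>*\<gamma>) (x,y,z)
   = (\<alpha>*x+\<beta>*y-2*\<gamma>*z)^2"
  unfolding qform_def by (simp add: power2_eq_square algebra_simps)

lemma lin_phi: "phi a0 b0 = (\<alpha>,\<beta>,\<gamma>) \<Longrightarrow> phi a b = (x,y,z) \<Longrightarrow>
   \<alpha>*x+\<beta>*y-2*\<gamma>*z = (b0*a - a0*b)^2"
proof -
  have key: "\<And>X Y. (-\<i>*X/2)*(-\<i>*Y/2) = -(X*Y)/(4::complex)" by (simp add: field_simps)
  assume "phi a0 b0 = (\<alpha>,\<beta>,\<gamma>)" "phi a b = (x,y,z)"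
  then have "\<alpha> = (2*a0^2+b0^2)/2" "\<beta> = -\<i>*(2*a0^2-b0^2)/2" "\<gamma> = a0*b0"
    "x = (2*a^2+b^2)/2" "y = -\<i>*(2*a^2-b^2)/2" "z = a*b" by (auto simp: phi_def)
  then show ?thesis by (simp only: key) (simp add: field_simps power2_eq_square)
qed

lemma qform_scale: "qform Q (k*x,k*y,k*z) = k^2 * qform Q (x,y,z)"
  unfolding qform_def by (cases Q) (simp add: power2_eq_square algebra_simps)

lemma no_root_const: "(\<And>u. poly p u \<noteq> (0::complex)) \<Longrightarrow> poly p u = poly p 0"
  using fundamental_theorem_of_algebra unfolding constant_def by blast




lemma qform_C0: "qform C0 (x,y,z) = x^2 + y^2 - 2*z^2"
  unfolding qform_def C0_def by simp

lemma lform_H0: "lform H0 (x,y,z) = y - z"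
  unfolding lform_def H0_def by simp

lemma qform_smul: "qform (t*a, t*b, t*c, t*d, t*e, t*f) p = t * qform (a,b,c,d,e,f) p"
  unfolding qform_def by (cases p) (simp add: algebra_simps)

lemma qform_diff: "qform (a-a', b-b', c-c', d-d', e-e', f-f') p =
    qform (a,b,c,d,e,f) p - qform (a',b',c',d',e',f') p"
  unfolding qform_def by (cases p) (simp add: algebra_simps)

lemma pt_eq_self: "pt_eq p p"
  unfolding pt_eq_def by (rule exI[of _ 1]) (cases p, simp)

lemma phi_scale: "phi (s*a) (s*b) = (s^2 * fst (phi a b), s^2 * fst (snd (phi a b)), s^2 * snd (snd (phi a b)))"
  unfolding phi_def by (simp add: power2_eq_square algebra_simps)

lemma tangent:
  assumes q: "phi a0 b0 = (\<alpha>,\<beta>,\<gamma>)" and pnz: "p \<noteq> (0,0,0)" and qnz: "(\<alpha>,\<beta>,\<gamma>) \<noteq> (0,0,0)"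
  shows "(qform C0 p = 0 \<and> (case p of (x,y,z) \<Rightarrow> \<alpha>*x+\<beta>*y-2*\<gamma>*z) = 0) \<longleftrightarrow> pt_eq (\<alpha>,\<beta>,\<gamma>) p"
proof
  assume h: "qform C0 p = 0 \<and> (case p of (x,y,z) \<Rightarrow> \<alpha>*x+\<beta>*y-2*\<gamma>*z) = 0"
  obtain x y z where p: "p = (x,y,z)" by (cases p)
  obtain a b where ab: "phi a b = (x,y,z)" using phi_surj h p by blast
  have "(b0*a - a0*b)^2 = 0" using lin_phi[OF q ab] h p by simp
  then have e: "b0*a = a0*b" by simp
  obtain \<sigma> where s: "a = \<sigma>*a0" "b = \<sigma>*b0"
  proof (cases "a0 = 0")
    case False
    then show ?thesis using that[of "a/a0"] e by (auto simp: field_simps)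
  next
    case True
    have "b0 \<noteq> 0"
    proof
      assume "b0 = 0"
      then have "phi a0 b0 = (0,0,0)" using True by (simp add: phi_def)
      then show False using q qnz by simp
    qed
    then show ?thesis using that[of "b/b0"] e True by (auto simp: field_simps)
  qed
  have pe: "p = (\<sigma>^2*\<alpha>, \<sigma>^2*\<beta>, \<sigma>^2*\<gamma>)" using phi_scale[of \<sigma> a0 b0] q ab p s
    by (simp add: mult.commute)
  then have "\<sigma> \<noteq> 0" using pnz by auto
  then show "pt_eq (\<alpha>,\<beta>,\<gamma>) p" unfolding pt_eq_def by (intro exI[of _ "\<sigma>^2"]) (simp add: pe)
next
  assume "pt_eq (\<alpha>,\<beta>,\<gamma>) p"
  then obtain t where p: "p = (t*\<alpha>, t*\<beta>, t*\<gamma>)" unfolding pt_eq_def by auto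
  have c: "qform C0 (\<alpha>,\<beta>,\<gamma>) = 0" using q phi_on_C0 by metis
  then have "qform C0 p = 0" using qform_scale[of C0 t \<alpha> \<beta> \<gamma>] p by simp
  moreover have "(case p of (x,y,z) \<Rightarrow> \<alpha>*x+\<beta>*y-2*\<gamma>*z) = t * qform C0 (\<alpha>,\<beta>,\<gamma>)"
    unfolding p qform_C0 by (simp add: power2_eq_square algebra_simps)
  ultimately show "qform C0 p = 0 \<and> (case p of (x,y,z) \<Rightarrow> \<alpha>*x+\<beta>*y-2*\<gamma>*z) = 0" using c by simp
qed

lemma C0side:
  assumes q: "phi a0 b0 = (\<alpha>,\<beta>,\<gamma>)" and qnz: "(\<alpha>,\<beta>,\<gamma>) \<noteq> (0,0,0)"
    and h: "\<And>p. qform C0 p = 0 \<Longrightarrow> (qform Q p = 0 \<longleftrightarrow> (case p of (x,y,z) \<Rightarrow> \<alpha>*x+\<beta>*y-2*\<gamma>*z) = 0)"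
  shows "meets_C0_only_at Q (\<alpha>,\<beta>,\<gamma>)"
  unfolding meets_C0_only_at_def using tangent[OF q _ qnz] h by blast

lemma two_pts:
  assumes "meets_H0_exactly_at Q r"
    and "(x1,y1,y1) \<noteq> (0,0,0)" "qform Q (x1,y1,y1) = 0"
    and "(x2,y2,y2) \<noteq> (0,0,0)" "qform Q (x2,y2,y2) = 0"
  shows "x1*y2 = x2*y1"
proof -
  obtain r1 r2 r3 where r: "r = (r1,r2,r3)" by (cases r)
  from assms have "pt_eq r (x1,y1,y1)" "pt_eq r (x2,y2,y2)"
    unfolding meets_H0_exactly_at_def by (auto simp: lform_H0)
  then obtain t1 t2 where "x1 = t1*r1" "y1 = t1*r2" "x2 = t2*r1" "y2 = t2*r2"
    unfolding pt_eq_def r by auto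
  then show ?thesis by (simp only:) (simp add: algebra_simps)
qed

lemma not_contains: "meets_H0_exactly_at Q r \<Longrightarrow> \<not> contains_H0 Q"
proof
  assume m: "meets_H0_exactly_at Q r" and c: "contains_H0 Q"
  have "qform Q (1,0,0) = 0" "qform Q (0,1,1) = 0" using c unfolding contains_H0_def by (auto simp: lform_H0)
  then have "(1::complex)*1 = 0*0" using two_pts[OF m, of 1 0 0 1] by simp
  then show False by simp
qed

lemma H0_disc:
  assumes m: "meets_H0_exactly_at (A,B,C,D,E,F) r"
  shows "(D+E)^2 = 4*A*(B+C+F)"
proof (rule ccontr)
  assume nd: "(D+E)^2 \<noteq> 4*A*(B+C+F)"
  define a where "a = A"
  define b where "b = D+E"
  define c where "c = B+C+F"
  have f: "qform (A,B,C,D,E,F) (x,y,y) = a*x^2 + b*x*y + c*y^2" for x y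
    unfolding qform_def a_def b_def c_def by (simp add: power2_eq_square algebra_simps)
  show False
  proof (cases "a = 0")
    case True
    then have "b \<noteq> 0" using nd b_def a_def by auto
    have "1*b = (-c)*0" 
      by (rule two_pts[OF m]) (auto simp: f True \<open>b\<noteq>0\<close> power2_eq_square algebra_simps)
    then show False using \<open>b\<noteq>0\<close> by simp
  next
    case False
    define s where "s = csqrt (b^2 - 4*a*c)"
    have s2: "s^2 = b^2 - 4*a*c" unfolding s_def by simp
    have root: "a*((-b+k)/(2*a))^2 + b*((-b+k)/(2*a))*1 + c*1^2 = 0" if "k^2 = b^2 - 4*a*c" for k
      using False that by (simp add: field_simps power2_eq_square) algebra
    have r1: "a*((-b+s)/(2*a))^2 + b*((-b+s)/(2*a))*1 + c*1^2 = 0" by (rule root) (simp add: s2)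
    have r2: "a*((-b+(-s))/(2*a))^2 + b*((-b+(-s))/(2*a))*1 + c*1^2 = 0" by (rule root) (simp add: s2)
    have "((-b+s)/(2*a))*1 = ((-b+(-s))/(2*a))*1"
      by (rule two_pts[OF m]) (simp_all only: f r1 r2, simp_all)
    then have "s = 0" using False by (simp add: field_simps)
    then show False using s2 nd a_def b_def c_def by auto
  qed
qed

lemma sq_H0:
  assumes uv: "(u,v) \<noteq> (0,0)" and h: "\<And>x y. qform Q (x,y,y) = (v*x - u*y)^2"
  shows "meets_H0_exactly_at Q (u,v,v)"
  unfolding meets_H0_exactly_at_def
proof (intro conjI allI impI)
  show "(u,v,v) \<noteq> (0,0,0)" using uv by auto
  fix p :: pt assume pnz: "p \<noteq> (0,0,0)"
  obtain x y z where p: "p = (x,y,z)" by (cases p)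
  show "(qform Q p = 0 \<and> lform H0 p = 0) \<longleftrightarrow> pt_eq (u,v,v) p"
  proof
    assume "qform Q p = 0 \<and> lform H0 p = 0"
    then have z: "z = y" and e: "v*x = u*y" using h[of x y] by (auto simp: p lform_H0)
    show "pt_eq (u,v,v) p"
    proof (cases "v = 0")
      case False
      then have "y \<noteq> 0" using pnz p z e uv by auto
      then show ?thesis unfolding pt_eq_def p using False e z
        by (intro exI[of _ "y/v"]) (auto simp: field_simps)
    next
      case True
      then have "u \<noteq> 0" "y = 0" using uv e by auto
      then have "x \<noteq> 0" using pnz p z by auto
      then show ?thesis unfolding pt_eq_def p using True \<open>u\<noteq>0\<close> \<open>y=0\<close> z
        by (intro exI[of _ "x/u"]) auto
    qed
  next
    assume "pt_eq (u,v,v) p"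
    then obtain t where "p = (t*u, t*v, t*v)" unfolding pt_eq_def by auto
    then show "qform Q p = 0 \<and> lform H0 p = 0" using h by (simp add: lform_H0 algebra_simps)
  qed
qed

lemma H0_scale:
  assumes "t \<noteq> 0" "meets_H0_exactly_at (a,b,c,d,e,f) r"
  shows "meets_H0_exactly_at (t*a,t*b,t*c,t*d,t*e,t*f) r"
  using assms unfolding meets_H0_exactly_at_def by (simp add: qform_smul)



lemma forward:
  assumes q: "phi a0 b0 = (\<alpha>,\<beta>,\<gamma>)" and qnz: "(\<alpha>,\<beta>,\<gamma>) \<noteq> (0,0,0)"
    and M: "meets_C0_only_at Q (\<alpha>,\<beta>,\<gamma>)"
  shows "\<exists>l m. Q = (l + m*\<alpha>^2, l + m*\<beta>^2, -2*l + m*(4*\<gamma>^2), m*(2*\<alpha>*\<beta>), m*(-4*\<alpha>*\<gamma>), m*(-4*\<beta>*\<gamma>))"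
proof -
  obtain A B C D E F where Q: "Q = (A,B,C,D,E,F)" by (metis prod_cases6)
  have Qq: "qform Q (\<alpha>,\<beta>,\<gamma>) = 0"
    using M qnz pt_eq_self unfolding meets_C0_only_at_def by blast
  have ab0: "(a0,b0) \<noteq> (0,0)" using q qnz by (auto simp: phi_def)
  obtain c d where Dn: "a0*d - b0*c \<noteq> 0"
  proof (cases "a0 = 0")
    case False then show ?thesis using that[where c=0 and d=1] by simp
  next
    case True then show ?thesis using that[where c=1 and d=0] ab0 by simp
  qed
  define Dt where "Dt = a0*d - b0*c"
  have Dt: "Dt \<noteq> 0" using Dn Dt_def by simp
  obtain P where P: "\<And>u. poly P u = qform Q (phi (a0*u+c) (b0*u+d))" using poly_rep by blast
  have q': "\<alpha> = (2*a0^2+b0^2)/2" "\<beta> = -\<i>*(2*a0^2-b0^2)/2" "\<gamma> = a0*b0"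
    using q by (auto simp: phi_def)
  have nz: "poly P u \<noteq> 0" for u
  proof
    assume h: "poly P u = 0"
    define a where "a = a0*u+c"
    define b where "b = b0*u+d"
    have pnz: "phi a b \<noteq> (0,0,0)"
    proof
      assume "phi a b = (0,0,0)"
      then have "a = 0" "b = 0" using phi_zero by auto
      then have "Dt = 0" unfolding Dt_def a_def b_def by algebra
      then show False using Dt by simp
    qed
    have "qform Q (phi a b) = 0" using h P a_def b_def by simp
    then have "pt_eq (\<alpha>,\<beta>,\<gamma>) (phi a b)" using M pnz phi_on_C0 unfolding meets_C0_only_at_def by blast
    then obtain \<tau> where "phi a b = (\<tau>*\<alpha>, \<tau>*\<beta>, \<tau>*\<gamma>)" unfolding pt_eq_def by auto
    then have "a*b0 = a0*b" using phi_prop unfolding q' by blast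
    then have "Dt = 0" unfolding Dt_def a_def b_def by algebra
    then show False using Dt by simp
  qed
  define e0 where "e0 = qform Q (phi c d)"
  have const: "qform Q (phi (a0*u+c) (b0*u+d)) = e0" for u
    using no_root_const[of P u, OF nz] P[of u] P[of 0] e0_def by simp
  have main: "qform Q (phi a b) = e0 * ((a0*b - b0*a)/Dt)^4" for a b
  proof -
    define t where "t = (a0*b - b0*a)/Dt"
    define s where "s = (a*d - b*c)/Dt"
    have n1: "a0*(a*d-b*c) + c*(a0*b-b0*a) = a*Dt" and n2: "b0*(a*d-b*c) + d*(a0*b-b0*a) = b*Dt"
      unfolding Dt_def by (simp_all add: algebra_simps)
    have "a0*s + c*t = (a0*(a*d-b*c) + c*(a0*b-b0*a))/Dt" unfolding s_def t_def by (simp add: add_divide_distrib)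
    also have "\<dots> = a" unfolding n1 using Dt by simp
    finally have ab1: "a = a0*s + c*t" ..
    have "b0*s + d*t = (b0*(a*d-b*c) + d*(a0*b-b0*a))/Dt" unfolding s_def t_def by (simp add: add_divide_distrib)
    also have "\<dots> = b" unfolding n2 using Dt by simp
    finally have ab2: "b = b0*s + d*t" ..
    note ab = ab1 ab2
    show ?thesis
    proof (cases "t = 0")
      case False
      have "a = t*(a0*(s/t)+c)" "b = t*(b0*(s/t)+d)" using ab False by (auto simp: field_simps)
      then have "qform Q (phi a b) = t^4 * qform Q (phi (a0*(s/t)+c) (b0*(s/t)+d))"
        using qform_phi_hom by metis
      then have "qform Q (phi a b) = t^4 * e0" by (simp only: const)
      then show ?thesis unfolding t_def by (simp add: mult.commute)
    next
      case True
      then have "a = s*a0" "b = s*b0" using ab by auto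
      then have "qform Q (phi a b) = s^4 * qform Q (phi a0 b0)" using qform_phi_hom by metis
      then show ?thesis using True Qq q t_def by simp
    qed
  qed
  define m where "m = e0/Dt^4"
  have Hq: "qform (\<alpha>^2, \<beta>^2, 4*\<gamma>^2, 2*\<alpha>*\<beta>, -4*\<alpha>*\<gamma>, -4*\<beta>*\<gamma>) (phi a b) = (b0*a - a0*b)^4" for a b
  proof -
    obtain x y z where p: "phi a b = (x,y,z)" by (cases "phi a b")
    show ?thesis unfolding p qform_Hq lin_phi[OF q p] by simp
  qed
  have R0: "qform (A - m*\<alpha>^2, B - m*\<beta>^2, C - m*(4*\<gamma>^2), D - m*(2*\<alpha>*\<beta>), E - m*(-4*\<alpha>*\<gamma>), F - m*(-4*\<beta>*\<gamma>)) (phi a b) = 0" for a b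
  proof -
    have "qform (A - m*\<alpha>^2, B - m*\<beta>^2, C - m*(4*\<gamma>^2), D - m*(2*\<alpha>*\<beta>), E - m*(-4*\<alpha>*\<gamma>), F - m*(-4*\<beta>*\<gamma>)) (phi a b)
       = qform Q (phi a b) - m * qform (\<alpha>^2, \<beta>^2, 4*\<gamma>^2, 2*\<alpha>*\<beta>, -4*\<alpha>*\<gamma>, -4*\<beta>*\<gamma>) (phi a b)"
      unfolding qform_diff qform_smul Q by simp
    also have "\<dots> = e0 * ((a0*b - b0*a)/Dt)^4 - e0/Dt^4 * (b0*a - a0*b)^4" unfolding main Hq m_def by simp
    also have "\<dots> = 0" using Dt by (simp add: field_simps) algebra
    finally show ?thesis .
  qed
  from kernel[OF R0] have k: "B - m*\<beta>^2 = A - m*\<alpha>^2" "C - m*(4*\<gamma>^2) = -2*(A - m*\<alpha>^2)"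
    "D - m*(2*\<alpha>*\<beta>) = 0" "E - m*(-4*\<alpha>*\<gamma>) = 0" "F - m*(-4*\<beta>*\<gamma>) = 0" by blast+
  show ?thesis
    apply (rule exI[of _ "A - m*\<alpha>^2"], rule exI[of _ m])
    unfolding Q prod.inject apply (intro conjI)
    using k by (simp_all add: algebra_simps eq_neg_iff_add_eq_0)
qed



theorem lemmaB7:
  fixes \<alpha> \<beta> \<gamma> :: complex
  assumes q_nz: "(\<alpha>, \<beta>, \<gamma>) \<noteq> (0, 0, 0)"
    and q_on_C0: "qform C0 (\<alpha>, \<beta>, \<gamma>) = 0"
    and q_notin_H0: "\<beta> \<noteq> \<gamma>"
  defines "Hq2 \<equiv> (\<alpha>^2, \<beta>^2, 4*\<gamma>^2, 2*\<alpha>*\<beta>, -4*\<alpha>*\<gamma>, -4*\<beta>*\<gamma>) :: conic"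
    and "Cq \<equiv> ((\<beta> - 2*\<gamma>)^2, 3*\<beta>^2 - 4*\<beta>*\<gamma> + 2*\<gamma>^2, 4*\<beta>*(2*\<gamma> - \<beta>),
              2*\<alpha>*\<beta>, -4*\<alpha>*\<gamma>, -4*\<beta>*\<gamma>) :: conic"
  shows "(\<forall>Q :: conic. Q \<noteq> (0,0,0,0,0,0) \<longrightarrow>
            ((meets_C0_only_at Q (\<alpha>, \<beta>, \<gamma>) \<and> (\<exists>r. meets_H0_exactly_at Q r) \<and> \<not> contains_H0 Q)
             \<longleftrightarrow> (conic_eq Hq2 Q \<or> conic_eq Cq Q)))
       \<and> meets_H0_exactly_at Hq2 (2*\<gamma> - \<beta>, \<alpha>, \<alpha>)
       \<and> meets_H0_exactly_at Cq (\<alpha>, 2*\<gamma> - \<beta>, 2*\<gamma> - \<beta>)"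
proof -
  have rel: "\<alpha>^2 = 2*\<gamma>^2 - \<beta>^2" using q_on_C0 unfolding qform_C0 by (simp add: algebra_simps)
  obtain a0 b0 where q: "phi a0 b0 = (\<alpha>,\<beta>,\<gamma>)" using phi_surj q_on_C0 by blast
  have uv1: "(2*\<gamma> - \<beta>, \<alpha>) \<noteq> (0,0)" and uv2: "(\<alpha>, 2*\<gamma> - \<beta>) \<noteq> (0,0)"
  proof -
    have "\<not> (\<alpha> = 0 \<and> \<beta> = 2*\<gamma>)"
    proof
      assume h: "\<alpha> = 0 \<and> \<beta> = 2*\<gamma>"
      then have "2*\<gamma>^2 = 0" using rel by (simp add: power2_eq_square algebra_simps)
      then show False using h q_nz by simp
    qed
    then show "(2*\<gamma> - \<beta>, \<alpha>) \<noteq> (0,0)" "(\<alpha>, 2*\<gamma> - \<beta>) \<noteq> (0,0)" by auto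
  qed
  have HqF: "qform Hq2 p = (case p of (x,y,z) \<Rightarrow> \<alpha>*x+\<beta>*y-2*\<gamma>*z)^2" for p
  proof -
    obtain x y z where p: "p = (x,y,z)" by (cases p)
    show ?thesis unfolding p Hq2_def qform_Hq prod.case ..
  qed
  have CqF: "qform Cq p = (case p of (x,y,z) \<Rightarrow> \<alpha>*x+\<beta>*y-2*\<gamma>*z)^2 + 2*(\<beta>-\<gamma>)^2 * qform C0 p" for p
  proof -
    obtain x y z where p: "p = (x,y,z)" by (cases p)
    show ?thesis unfolding p Cq_def qform_def C0_def using rel by (simp only: prod.case) algebra
  qed
  have HqH0: "meets_H0_exactly_at Hq2 (2*\<gamma> - \<beta>, \<alpha>, \<alpha>)"
  proof (rule sq_H0[OF uv1])
    fix x y show "qform Hq2 (x,y,y) = (\<alpha>*x - (2*\<gamma>-\<beta>)*y)^2"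
      unfolding HqF by (simp add: algebra_simps)
  qed
  have CqH0: "meets_H0_exactly_at Cq (\<alpha>, 2*\<gamma> - \<beta>, 2*\<gamma> - \<beta>)"
  proof (rule sq_H0[OF uv2])
    fix x y show "qform Cq (x,y,y) = ((2*\<gamma>-\<beta>)*x - \<alpha>*y)^2"
      unfolding Cq_def qform_def using rel by (simp only: prod.case) algebra
  qed
  have allQ: "(meets_C0_only_at Q (\<alpha>, \<beta>, \<gamma>) \<and> (\<exists>r. meets_H0_exactly_at Q r) \<and> \<not> contains_H0 Q)
             \<longleftrightarrow> (conic_eq Hq2 Q \<or> conic_eq Cq Q)" if Qnz: "Q \<noteq> (0,0,0,0,0,0)" for Q
  proof
    assume h: "meets_C0_only_at Q (\<alpha>, \<beta>, \<gamma>) \<and> (\<exists>r. meets_H0_exactly_at Q r) \<and> \<not> contains_H0 Q"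
    then obtain r where r: "meets_H0_exactly_at Q r" by blast
    obtain l m where Q: "Q = (l + m*\<alpha>^2, l + m*\<beta>^2, -2*l + m*(4*\<gamma>^2), m*(2*\<alpha>*\<beta>), m*(-4*\<alpha>*\<gamma>), m*(-4*\<beta>*\<gamma>))"
      using forward[OF q q_nz] h by blast
    have "(m*(2*\<alpha>*\<beta>) + m*(-4*\<alpha>*\<gamma>))^2 = 4*(l + m*\<alpha>^2)*((l + m*\<beta>^2) + (-2*l + m*(4*\<gamma>^2)) + m*(-4*\<beta>*\<gamma>))"
      using H0_disc r unfolding Q by blast
    then have "l*(l - 2*m*(\<beta>-\<gamma>)^2) = 0" using rel by algebra
    then have "l = 0 \<or> l = 2*m*(\<beta>-\<gamma>)^2" by auto
    then show "conic_eq Hq2 Q \<or> conic_eq Cq Q"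
    proof
      assume l0: "l = 0"
      then have "m \<noteq> 0" using Qnz Q by auto
      then have "conic_eq Hq2 Q" unfolding conic_eq_def Hq2_def Q l0
        by (intro exI[of _ m]) (simp add: algebra_simps)
      then show ?thesis ..
    next
      assume l1: "l = 2*m*(\<beta>-\<gamma>)^2"
      then have "m \<noteq> 0" using Qnz Q by auto
      have "Q = (m*(\<beta> - 2*\<gamma>)^2, m*(3*\<beta>^2 - 4*\<beta>*\<gamma> + 2*\<gamma>^2), m*(4*\<beta>*(2*\<gamma> - \<beta>)),
              m*(2*\<alpha>*\<beta>), m*(-4*\<alpha>*\<gamma>), m*(-4*\<beta>*\<gamma>))"
        unfolding Q l1 prod.inject apply (intro conjI)
        using rel apply algebra apply algebra apply algebra by simp_all
      then have "conic_eq Cq Q" unfolding conic_eq_def Cq_def using \<open>m \<noteq> 0\<close>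
        by (intro exI[of _ m]) simp
      then show ?thesis ..
    qed
  next
    assume "conic_eq Hq2 Q \<or> conic_eq Cq Q"
    then show "meets_C0_only_at Q (\<alpha>, \<beta>, \<gamma>) \<and> (\<exists>r. meets_H0_exactly_at Q r) \<and> \<not> contains_H0 Q"
    proof
      assume "conic_eq Hq2 Q"
      then obtain t where t: "t \<noteq> 0" and Q: "Q = (t*\<alpha>^2, t*\<beta>^2, t*(4*\<gamma>^2), t*(2*\<alpha>*\<beta>), t*(-4*\<alpha>*\<gamma>), t*(-4*\<beta>*\<gamma>))"
        unfolding conic_eq_def Hq2_def by auto
      have qf: "qform Q p = t * qform Hq2 p" for p unfolding Q Hq2_def qform_smul ..
      have m1: "meets_C0_only_at Q (\<alpha>, \<beta>, \<gamma>)"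
        by (rule C0side[OF q q_nz]) (simp add: qf HqF t)
      have m2: "meets_H0_exactly_at Q (2*\<gamma> - \<beta>, \<alpha>, \<alpha>)"
        using H0_scale[OF t, of "\<alpha>^2" "\<beta>^2" "4*\<gamma>^2" "2*\<alpha>*\<beta>" "-4*\<alpha>*\<gamma>" "-4*\<beta>*\<gamma>"] HqH0
        unfolding Q Hq2_def by simp
      show ?thesis using m1 m2 not_contains by blast
    next
      assume "conic_eq Cq Q"
      then obtain t where t: "t \<noteq> 0" and Q: "Q = (t*(\<beta> - 2*\<gamma>)^2, t*(3*\<beta>^2 - 4*\<beta>*\<gamma> + 2*\<gamma>^2), t*(4*\<beta>*(2*\<gamma> - \<beta>)),
              t*(2*\<alpha>*\<beta>), t*(-4*\<alpha>*\<gamma>), t*(-4*\<beta>*\<gamma>))"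
        unfolding conic_eq_def Cq_def by auto
      have qf: "qform Q p = t * qform Cq p" for p unfolding Q Cq_def qform_smul ..
      have m1: "meets_C0_only_at Q (\<alpha>, \<beta>, \<gamma>)"
        by (rule C0side[OF q q_nz]) (simp add: qf CqF t)
      have m2: "meets_H0_exactly_at Q (\<alpha>, 2*\<gamma> - \<beta>, 2*\<gamma> - \<beta>)"
        using H0_scale[OF t, of "(\<beta> - 2*\<gamma>)^2" "3*\<beta>^2 - 4*\<beta>*\<gamma> + 2*\<gamma>^2" "4*\<beta>*(2*\<gamma> - \<beta>)"
            "2*\<alpha>*\<beta>" "-4*\<alpha>*\<gamma>" "-4*\<beta>*\<gamma>"] CqH0
        unfolding Q Cq_def by simp
      show ?thesis using m1 m2 not_contains by blast
    qed
  qed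
  show ?thesis using allQ HqH0 CqH0 by blast
qed

end
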